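(* Let $k$ be an algebraically closed field of characteristic $p>0$, $A=k[X,Y]$, and $F=X^p+Y^{p+1}$. Then $A^p\subseteq k[F,Y]$ (so $F$ is a good pseudo field generator in $A$), for every $\lambda\in k$ the ring $A/(F-\lambda)$ is $k$-rational, and $F$ is not a field generator in $A$.
   Context: $A^p=\{a^p:a\in A\}$. $F$ is a good pseudo field generator in $A$ if there is $G\in A$ with $\operatorname{Frac}A$ purely inseparable over $k(F,G)$. $F$ is a field generator in $A$ if $k(F,G)=\operatorname{Frac}A$ for some $G\in\operatorname{Frac}A$. "$A/(H)$ is $k$-rational" means $H$ is irreducible and $\operatorname{Frac}(A/(H))$ is purely transcendental of transcendence degree $1$ over $k$. *)

theory Defs
  imports "HOL-Computational_Algebra.Computational_Algebra"
begin

text \<open>Bivariate polynomials k[X,Y] are represented as 'k poly poly: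
  the outer polynomial variable is Y, the coefficients are polynomials in X.\<close>

definition alg_closed :: "'k::field itself \<Rightarrow> bool" where
  "alg_closed _ \<longleftrightarrow> (\<forall>q::'k poly. degree q \<ge> 1 \<longrightarrow> (\<exists>x. poly q x = 0))"

definition varX :: "'k::comm_ring_1 poly poly" where
  "varX = [:[:0, 1:]:]"

definition varY :: "'k::comm_ring_1 poly poly" where
  "varY = [:0, 1:]"

definition constA :: "'k::comm_ring_1 \<Rightarrow> 'k poly poly" where
  "constA c = [:[:c:]:]"

definition eval2 :: "('k::comm_ring_1 \<Rightarrow> 'b::comm_ring_1) \<Rightarrow> 'k poly poly \<Rightarrow> 'b \<Rightarrow> 'b \<Rightarrow> 'b" where
  "eval2 e P x y = poly (map_poly (\<lambda>c. poly (map_poly e c) x) P) y"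

definition kalg2 :: "'k::comm_ring_1 poly poly \<Rightarrow> 'k poly poly \<Rightarrow> 'k poly poly set" where
  "kalg2 F G = {eval2 constA P F G | P. True}"

definition kfield2 :: "('k::field poly poly) fract \<Rightarrow> 'k poly poly fract \<Rightarrow> 'k poly poly fract set" where
  "kfield2 F G = {eval2 (\<lambda>c. to_fract (constA c)) P F G / eval2 (\<lambda>c. to_fract (constA c)) Q F G
                  | P Q. eval2 (\<lambda>c. to_fract (constA c)) Q F G \<noteq> 0}"

definition purely_inseparable_over :: "'k::field poly poly fract set \<Rightarrow> bool" where
  "purely_inseparable_over K \<longleftrightarrow> (\<forall>x::'k poly poly fract. \<exists>n. x ^ (CHAR('k) ^ n) \<in> K)"

definition good_pseudo_field_generator :: "'k::field poly poly \<Rightarrow> bool" where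
  "good_pseudo_field_generator F \<longleftrightarrow>
     (\<exists>G. purely_inseparable_over (kfield2 (to_fract F) (to_fract G)))"

definition field_generator :: "'k::field poly poly \<Rightarrow> bool" where
  "field_generator F \<longleftrightarrow> (\<exists>G. kfield2 (to_fract F) G = UNIV)"

text \<open>A/(H) is k-rational: H irreducible and Frac(A/(H)) is k-isomorphic to the
  rational function field k(t) = 'k poly fract.  A k-algebra map A/(H) \<rightarrow> k(t) is the
  same as a k-algebra map A \<rightarrow> k(t) (given by the images u, v of X, Y) with kernel
  containing (H); it is injective iff the kernel is exactly (H), and it induces an
  isomorphism Frac(A/(H)) \<cong> k(t) iff k(t) is generated as a field by its image.\<close>
definition k_rational_quotient :: "'k::field poly poly \<Rightarrow> bool" where
  "k_rational_quotient H \<longleftrightarrow> irreducible H \<and>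
     (\<exists>u v :: 'k poly fract.
        (\<forall>P. eval2 (\<lambda>c. to_fract [:c:]) P u v = 0 \<longleftrightarrow> H dvd P) \<and>
        (\<forall>r. \<exists>P Q. eval2 (\<lambda>c. to_fract [:c:]) Q u v \<noteq> 0 \<and>
               r = eval2 (\<lambda>c. to_fract [:c:]) P u v / eval2 (\<lambda>c. to_fract [:c:]) Q u v))"

end

theory Submission
  imports Defs
begin


definition rhom :: "('a::comm_ring_1 \<Rightarrow> 'b::comm_ring_1) \<Rightarrow> bool" where
  "rhom f \<longleftrightarrow> f 0 = 0 \<and> f 1 = 1 \<and> (\<forall>a b. f (a+b) = f a + f b) \<and> (\<forall>a b. f (a*b) = f a * f b)"

lemma rhomD: assumes "rhom f"
  shows "f 0 = 0" "f 1 = 1" "f (a+b) = f a + f b" "f (a*b) = f a * f b"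
    "f (-a) = - f a" "f (a - b) = f a - f b" "f (a^n) = (f a)^n"
proof -
  show h0: "f 0 = 0" and h1: "f 1 = 1" and ha: "f (a+b) = f a + f b" and hm: "f (a*b) = f a * f b"
    using assms unfolding rhom_def by auto
  have "f (-a) + f a = 0" using assms unfolding rhom_def by (metis add.left_inverse)
  then show hn: "f (-a) = - f a" by (simp add: eq_neg_iff_add_eq_0)
  have "f (-b) + f b = 0" using assms unfolding rhom_def by (metis add.left_inverse)
  then have "f (-b) = - f b" by (simp add: eq_neg_iff_add_eq_0)
  then show "f (a - b) = f a - f b" using assms unfolding rhom_def
    by (metis diff_conv_add_uminus)
  show "f (a^n) = (f a)^n"
    by (induction n) (use assms in \<open>auto simp: rhom_def\<close>)
qed

lemma rhom_comp: "rhom f \<Longrightarrow> rhom g \<Longrightarrow> rhom (\<lambda>x. g (f x))"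
  by (simp add: rhom_def)

lemma rhom_poly: "rhom (\<lambda>p. poly p x)"
  by (simp add: rhom_def)

lemma rhom_const: "rhom (\<lambda>c. [:c:])"
  by (simp add: rhom_def one_pCons)

lemma rhom_to_fract: "rhom to_fract"
  by (simp add: rhom_def)

lemma map_poly_add_hom:
  assumes "rhom f" shows "map_poly f (a + b) = map_poly f a + map_poly f b"
  using assms by (intro poly_eqI) (simp add: coeff_map_poly rhomD)

lemma map_poly_mult_hom:
  assumes "rhom f" shows "map_poly f (a * b) = map_poly f a * map_poly f b"
proof (induction a)
  case 0
  then show ?case using assms by (simp add: rhomD)
next
  case (pCons c a)
  have "pCons c a * b = smult c b + pCons 0 (a * b)" by simp
  then have "map_poly f (pCons c a * b) = map_poly f (smult c b) + map_poly f (pCons 0 (a*b))"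
    using map_poly_add_hom[OF assms] by simp
  also have "\<dots> = smult (f c) (map_poly f b) + pCons 0 (map_poly f a * map_poly f b)"
    using assms pCons by (simp add: map_poly_smult map_poly_pCons rhomD)
  also have "\<dots> = map_poly f (pCons c a) * map_poly f b"
    using assms by (simp add: map_poly_pCons rhomD)
  finally show ?case .
qed

lemma rhom_map_poly: "rhom f \<Longrightarrow> rhom (map_poly f)"
  unfolding rhom_def[of "map_poly f"]
  using map_poly_add_hom map_poly_mult_hom by (auto simp: rhomD)

lemma rhom_inner: "rhom e \<Longrightarrow> rhom (\<lambda>c. poly (map_poly e c) x)"
  using rhom_comp[OF rhom_map_poly rhom_poly] by blast

lemma rhom_eval2: "rhom e \<Longrightarrow> rhom (\<lambda>P. eval2 e P x y)"
  unfolding eval2_def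
  using rhom_comp[OF rhom_map_poly[OF rhom_inner] rhom_poly] by blast

lemma rhom_constA: "rhom constA"
  unfolding constA_def by (simp add: rhom_def one_pCons)

lemma eval2_varX: "rhom e \<Longrightarrow> eval2 e varX x y = x"
  by (simp add: eval2_def varX_def map_poly_pCons rhomD)
lemma eval2_varY: "rhom e \<Longrightarrow> eval2 e varY x y = y"
  by (simp add: eval2_def varY_def map_poly_pCons rhomD)
lemma eval2_constA: "rhom e \<Longrightarrow> eval2 e (constA c) x y = e c"
  by (simp add: eval2_def constA_def map_poly_pCons rhomD)

lemma eval2_pCons: "rhom e \<Longrightarrow> eval2 e (pCons c P) x y = poly (map_poly e c) x + y * eval2 e P x y"
  by (simp add: eval2_def map_poly_pCons rhomD)

lemma eval2_to_fract:
  assumes "rhom e"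
  shows "eval2 (\<lambda>c. to_fract (e c)) P (to_fract x) (to_fract y) = to_fract (eval2 e P x y)"
proof -
  have e': "rhom (\<lambda>c. to_fract (e c))" using rhom_comp[OF assms rhom_to_fract] .
  have inner: "poly (map_poly (\<lambda>c. to_fract (e c)) c) (to_fract x) = to_fract (poly (map_poly e c) x)" for c
    by (induction c) (use assms e' in \<open>simp_all add: map_poly_pCons rhomD\<close>)
  show ?thesis
    by (induction P) (use assms e' inner in \<open>simp_all add: eval2_pCons eval2_def[of _ 0] rhomD\<close>)
qed



lemma prime_CHAR_field: "CHAR('k::field) = p \<Longrightarrow> p > 0 \<Longrightarrow> prime p"
  using prime_CHAR_semidom[where 'a='k] by simp

lemma CHAR_pp: "CHAR('k::field poly poly) = CHAR('k)" by simp

lemma frob_add: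
  fixes x y :: "'a::comm_semiring_1"
  assumes "CHAR('a) = p" "prime p"
  shows "(x + y) ^ p = x ^ p + y ^ p"
proof -
  have "prime CHAR('a)" using assms by simp
  from freshmans_dream[OF this assms(1)[symmetric]] show ?thesis .
qed

lemma kalg2_E: "eval2 constA P F G \<in> kalg2 F G"
  unfolding kalg2_def by blast
lemma kalg2_add: "a \<in> kalg2 F G \<Longrightarrow> b \<in> kalg2 F G \<Longrightarrow> a + b \<in> kalg2 F G"
proof -
  assume "a \<in> kalg2 F G" "b \<in> kalg2 F G"
  then obtain P Q where "a = eval2 constA P F G" "b = eval2 constA Q F G" unfolding kalg2_def by blast
  then have "a + b = eval2 constA (P + Q) F G" by (simp add: rhomD[OF rhom_eval2[OF rhom_constA]])
  then show ?thesis by (simp add: kalg2_E)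
qed
lemma kalg2_mult: "a \<in> kalg2 F G \<Longrightarrow> b \<in> kalg2 F G \<Longrightarrow> a * b \<in> kalg2 F G"
proof -
  assume "a \<in> kalg2 F G" "b \<in> kalg2 F G"
  then obtain P Q where "a = eval2 constA P F G" "b = eval2 constA Q F G" unfolding kalg2_def by blast
  then have "a * b = eval2 constA (P * Q) F G" by (simp add: rhomD[OF rhom_eval2[OF rhom_constA]])
  then show ?thesis by (simp add: kalg2_E)
qed
lemma kalg2_const: "constA c \<in> kalg2 F G"
  unfolding kalg2_def
  by (auto intro!: exI[of _ "constA c"] simp: eval2_constA[OF rhom_constA])
lemma kalg2_F: "F \<in> kalg2 F G"
  unfolding kalg2_def
  by (auto intro!: exI[of _ "varX"] simp: eval2_varX[OF rhom_constA])
lemma kalg2_G: "G \<in> kalg2 F G"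
  unfolding kalg2_def
  by (auto intro!: exI[of _ "varY"] simp: eval2_varY[OF rhom_constA])
lemma kalg2_diff: "a \<in> kalg2 F G \<Longrightarrow> b \<in> kalg2 F G \<Longrightarrow> a - b \<in> kalg2 F G"
proof -
  assume "a \<in> kalg2 F G" "b \<in> kalg2 F G"
  then obtain P Q where "a = eval2 constA P F G" "b = eval2 constA Q F G" unfolding kalg2_def by blast
  then have "a - b = eval2 constA (P - Q) F G" by (simp add: rhomD[OF rhom_eval2[OF rhom_constA]])
  then show ?thesis by (simp add: kalg2_E)
qed
lemma kalg2_power: "a \<in> kalg2 F G \<Longrightarrow> a ^ n \<in> kalg2 F G"
proof (induction n)
  case 0
  have "constA 1 \<in> kalg2 F G" by (rule kalg2_const)
  then show ?case by (simp add: constA_def one_pCons)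
next
  case (Suc n) then show ?case by (simp add: kalg2_mult)
qed

lemma part1:
  fixes F :: "'k::field poly poly"
  assumes "CHAR('k) = p" "p > 0" "F = varX ^ p + varY ^ (p + 1)"
  shows "a ^ p \<in> kalg2 F varY"
proof -
  have pr: "prime p" using prime_CHAR_field assms by blast
  have c1: "CHAR('k poly) = p" using assms by simp
  have c2: "CHAR('k poly poly) = p" using assms by simp
  have Xp: "varX ^ p \<in> kalg2 F varY"
  proof -
    have "varX ^ p = F - varY ^ (p+1)" using assms by simp
    then show ?thesis by (metis kalg2_diff kalg2_power kalg2_F kalg2_G)
  qed
  have cst: "[:c ^ p:] \<in> kalg2 F varY" for c :: "'k poly"
  proof (induction c)
    case 0 then show ?case using kalg2_const[of 0] assms by (simp add: constA_def zero_power)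
  next
    case (pCons x c)
    have e: "pCons x c = [:x:] + [:0,1:] * c" by simp
    have "(pCons x c) ^ p = [:x:]^p + [:0,1:]^p * c ^ p"
      unfolding e frob_add[OF c1 pr] power_mult_distrib ..
    also have "[:x:]^p = [:x^p:]" by (rule rhomD(7)[OF rhom_const, symmetric])
    finally have h: "(pCons x c) ^ p = [:x^p:] + [:0,1:]^p * c ^ p" .
    have "[:(pCons x c) ^ p:] = [:[:x^p:]:] + [:[:0,1:]^p:] * [:c ^ p:]"
      unfolding h rhomD(3,4)[OF rhom_const] ..
    also have "[:[:0,1:]^p:] = varX ^ p" unfolding varX_def by (rule rhomD(7)[OF rhom_const])
    finally have "[:(pCons x c) ^ p:] = constA (x^p) + varX ^ p * [:c ^ p:]"
      by (simp only: constA_def)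
    then show ?case using pCons.IH Xp by (simp only: kalg2_add kalg2_mult kalg2_const)
  qed
  show ?thesis
  proof (induction a)
    case 0 then show ?case using kalg2_const[of 0] assms by (simp add: constA_def zero_power)
  next
    case (pCons c a)
    have e: "pCons c a = [:c:] + varY * a" by (simp add: varY_def)
    have "(pCons c a) ^ p = [:c:]^p + varY^p * a ^ p"
      unfolding e frob_add[OF c2 pr] power_mult_distrib ..
    also have "[:c:]^p = [:c^p:]" by (rule rhomD(7)[OF rhom_const, symmetric])
    finally have h: "(pCons c a) ^ p = [:c^p:] + varY^p * a ^ p" .
    show ?case unfolding h
      by (intro kalg2_add kalg2_mult kalg2_power cst kalg2_G pCons.IH)
  qed
qed



lemma fract_repr: obtains a b where "b \<noteq> 0" "x = to_fract a / to_fract b"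
  by (cases x) (auto simp: Fract_conv_to_fract)

lemma part2:
  fixes F :: "'k::field poly poly"
  assumes "CHAR('k) = p" "p > 0" "F = varX ^ p + varY ^ (p + 1)"
  shows "good_pseudo_field_generator F"
  unfolding good_pseudo_field_generator_def purely_inseparable_over_def
proof (intro exI allI)
  fix x :: "'k poly poly fract"
  obtain a b where b: "b \<noteq> 0" and x: "x = to_fract a / to_fract b" by (rule fract_repr)
  obtain P where P: "a ^ p = eval2 constA P F varY" using part1[OF assms, of a] unfolding kalg2_def by blast
  obtain Q where Q: "b ^ p = eval2 constA Q F varY" using part1[OF assms, of b] unfolding kalg2_def by blast
  let ?e = "\<lambda>c. to_fract (constA c)"
  have EP: "eval2 ?e P (to_fract F) (to_fract varY) = to_fract (a ^ p)"
    using eval2_to_fract[OF rhom_constA] P by simp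
  have EQ: "eval2 ?e Q (to_fract F) (to_fract varY) = to_fract (b ^ p)"
    using eval2_to_fract[OF rhom_constA] Q by simp
  have "x ^ (CHAR('k) ^ 1) = to_fract (a^p) / to_fract (b^p)"
    using assms(1) by (simp add: x power_divide rhomD(7)[OF rhom_to_fract])
  moreover have "to_fract (b^p) \<noteq> 0" using b by simp
  ultimately show "x ^ (CHAR('k) ^ 1) \<in> kfield2 (to_fract F) (to_fract varY)"
    unfolding kfield2_def using EP EQ by (metis (mono_tags, lifting) mem_Collect_eq)
qed



lemma root_exists:
  assumes "alg_closed TYPE('k::field)" "p > 0"
  shows "\<exists>d::'k. d ^ p = c"
proof -
  let ?q = "monom (1::'k) p + [:-c:]"
  have "degree ?q = p"
    using assms(2) by (subst degree_add_eq_left) (auto simp: degree_monom_eq)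
  then have "1 \<le> degree ?q" using assms(2) by simp
  from assms(1)[unfolded alg_closed_def, rule_format, OF this] obtain d where "poly ?q d = 0" by blast
  then show ?thesis by (auto simp: poly_monom)
qed

lemma poly_sum_le:
  fixes q :: "'a::comm_semiring_1 poly"
  assumes "degree q \<le> N"
  shows "poly q x = (\<Sum>i\<le>N. coeff q i * x ^ i)"
proof -
  have "poly q x = (\<Sum>i\<le>degree q. coeff q i * x ^ i)" by (rule poly_altdef)
  also have "\<dots> = (\<Sum>i\<le>N. coeff q i * x ^ i)"
    by (rule sum.mono_neutral_cong_left) (use assms in \<open>auto simp: coeff_eq_0\<close>)
  finally show ?thesis .
qed

lemma dist_deg:
  fixes p a b i j :: nat
  assumes "i \<le> p" "j \<le> p" "(p+1)*a + p*i = (p+1)*b + p*j"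
  shows "i = j"
proof -
  have "(p+1)*(a+i) + j = (p+1)*(b+j) + i" using assms(3) by (simp add: algebra_simps)
  then have "((p+1)*(a+i) + j) mod (p+1) = ((p+1)*(b+j) + i) mod (p+1)"
    by (rule arg_cong[where f="\<lambda>z. z mod (p+1)"])
  moreover have "(q*x + y) mod q = y mod q" for q x y :: nat by simp
  ultimately have "j mod (p+1) = i mod (p+1)" by metis
  then show ?thesis using assms by simp
qed

lemma phi_sum_zero:
  fixes r :: "'k::field poly poly" and u :: "'k poly"
  assumes "degree u = p+1" "p > 0" "degree r \<le> p"
    and "(\<Sum>j\<le>p. pcompose (coeff r j) u * monom 1 p ^ j) = 0"
  shows "r = 0"
proof (rule ccontr)
  assume "r \<noteq> 0"
  define S where "S = {j. j \<le> p \<and> coeff r j \<noteq> 0}"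
  define f where "f j = (p+1) * degree (coeff r j) + p * j" for j
  define T where "T j = pcompose (coeff r j) u * monom (1::'k) p ^ j" for j
  have "degree r \<in> S" using \<open>r \<noteq> 0\<close> assms(3) by (simp add: S_def)
  then have Sne: "S \<noteq> {}" by blast
  have Sfin: "finite S" by (simp add: S_def)
  define m where "m = Max (f ` S)"
  have "m \<in> f ` S" unfolding m_def using Sne Sfin by simp
  then obtain j0 where j0: "j0 \<in> S" "f j0 = m" by blast
  have fle: "f j \<le> m" if "j \<in> S" for j unfolding m_def using that Sfin by simp
  have u0: "u \<noteq> 0" using assms(1) by auto
  have degT: "degree (T j) = f j" and T0: "T j \<noteq> 0" if "j \<in> S" for j
  proof -
    have c: "coeff r j \<noteq> 0" using that by (simp add: S_def)
    have pc: "pcompose (coeff r j) u \<noteq> 0"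
      using c u0 assms(1) by (metis degree_pcompose pcompose_eq_0 add_gr_0 zero_less_one)
    have mp: "monom (1::'k) p ^ j \<noteq> 0" by (simp add: monom_power)
    show "T j \<noteq> 0" using pc mp by (simp add: T_def)
    show "degree (T j) = f j"
      using pc mp by (simp add: T_def degree_mult_eq degree_pcompose assms(1) monom_power
          degree_monom_eq f_def mult.commute)
  qed
  have Tz: "T j = 0" if "j \<le> p" "j \<notin> S" for j using that by (simp add: S_def T_def)
  have others: "coeff (T j) m = 0" if "j \<le> p" "j \<noteq> j0" for j
  proof (cases "j \<in> S")
    case True
    have "f j \<noteq> f j0"
    proof
      assume "f j = f j0"
      then have "j = j0" using dist_deg[of j p j0] True j0(1) unfolding f_def S_def by auto
      with that show False by simp
    qed
    then have "f j < m" using fle[OF True] j0 by simp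
    then show ?thesis using degT[OF True] by (simp add: coeff_eq_0)
  next
    case False then show ?thesis using Tz that by simp
  qed
  have j0p: "j0 \<le> p" using j0 by (simp add: S_def)
  have "coeff (\<Sum>j\<le>p. T j) m = (\<Sum>j\<le>p. coeff (T j) m)" by (simp add: coeff_sum)
  also have "\<dots> = coeff (T j0) m + (\<Sum>j\<in>{..p}-{j0}. coeff (T j) m)"
    using j0p by (simp add: sum.remove)
  also have "(\<Sum>j\<in>{..p}-{j0}. coeff (T j) m) = 0" using others by (intro sum.neutral) auto
  finally have "coeff (\<Sum>j\<le>p. T j) m = coeff (T j0) m" by simp
  also have "\<dots> \<noteq> 0" using degT[OF j0(1)] T0[OF j0(1)] j0(2) by (metis leading_coeff_0_iff)
  finally show False using assms(4) unfolding T_def by simp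
qed



lemma X_monom: "[:0,1:] = monom (1::'a::comm_ring_1) 1"
  by (simp add: monom_Suc)

lemma monom_one_Suc: "monom (1::'a::comm_ring_1) (Suc n) = monom 1 n * [:0,1:]"
  unfolding X_monom mult_monom by simp

lemma H_form:
  fixes F :: "'k::field poly poly"
  assumes "F = varX ^ p + varY ^ (p + 1)"
  shows "F - constA c = monom 1 (p+1) + [:[:0,1:]^p - [:c:]:]"
proof -
  have "varY ^ (p+1) = (monom (1::'k poly) 1) ^ (p+1)" by (simp add: varY_def X_monom)
  also have "\<dots> = monom 1 (p+1)" by (simp only: monom_power power_one mult_1)
  finally have 1: "varY ^ (p+1) = (monom (1::'k poly) (p+1))" .
  have 2: "(varX::'k poly poly) ^ p = [:[:0,1:]^p:]" unfolding varX_def by (rule rhomD(7)[OF rhom_const, symmetric])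
  show ?thesis using assms 1 2 by (simp add: constA_def)
qed

lemma H_deg:
  fixes F :: "'k::field poly poly"
  assumes "F = varX ^ p + varY ^ (p + 1)"
  shows "degree (F - constA c) = p+1" "coeff (F - constA c) (p+1) = 1"
  unfolding H_form[OF assms]
  by (subst degree_add_eq_left) (auto simp: degree_monom_eq)

lemma part3:
  fixes F :: "'k::field poly poly"
  assumes ac: "alg_closed TYPE('k)" and ch: "CHAR('k) = p" and p0: "p > 0"
    and Fdef: "F = varX ^ p + varY ^ (p + 1)"
  shows "k_rational_quotient (F - constA c)"
proof -
  have pr: "prime p" using prime_CHAR_field ch p0 by blast
  have c1: "CHAR('k poly) = p" using ch by simp
  obtain d :: 'k where d: "d ^ p = c" using root_exists[OF ac p0] by blast
  define u :: "'k poly" where "u = monom (-1) (p+1) + [:d:]"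
  define v :: "'k poly" where "v = monom 1 p"
  define \<phi> where "\<phi> P = eval2 (\<lambda>c. [:c:]) P u v" for P
  define H where "H = F - constA c"
  have h\<phi>: "rhom \<phi>" unfolding \<phi>_def by (rule rhom_eval2[OF rhom_const])
  have \<phi>X: "\<phi> varX = u" unfolding \<phi>_def by (rule eval2_varX[OF rhom_const])
  have \<phi>Y: "\<phi> varY = v" unfolding \<phi>_def by (rule eval2_varY[OF rhom_const])
  have \<phi>C: "\<phi> (constA a) = [:a:]" for a unfolding \<phi>_def by (rule eval2_constA[OF rhom_const])
  have degu: "degree u = p+1" unfolding u_def
    by (subst degree_add_eq_left) (auto simp: degree_monom_eq)
  have m1: "(-1::'k)^p = -1" using minus_power_prime_CHAR[where 'a='k and p=p and x=1] ch pr by simp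
  have "u ^ p = monom (-1) (p+1) ^ p + [:d:] ^ p" unfolding u_def by (rule frob_add[OF c1 pr])
  also have "monom (-1::'k) (p+1) ^ p = monom (-1) ((p+1)*p)" by (simp only: monom_power m1)
  also have "[:d:] ^ p = [:c:]" using d by (simp add: rhomD(7)[OF rhom_const, symmetric])
  finally have up: "u ^ p = monom (-1) ((p+1)*p) + [:c:]" .
  have vp: "v ^ (p+1) = monom 1 ((p+1)*p)" unfolding v_def monom_power power_one by (simp only: mult.commute)
  have \<phi>H: "\<phi> H = 0"
  proof -
    have "\<phi> H = u^p + v^(p+1) - [:c:]"
      by (simp add: H_def Fdef rhomD[OF h\<phi>] \<phi>X \<phi>Y \<phi>C)
    also have "\<dots> = monom (-1) ((p+1)*p) + monom 1 ((p+1)*p)" unfolding up vp by simp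
    also have "\<dots> = monom (-1 + 1) ((p+1)*p)" by (rule add_monom)
    finally show ?thesis by simp
  qed
  have Hdeg: "degree H = p+1" and Hlc: "coeff H (p+1) = 1" unfolding H_def using H_deg[OF Fdef] by auto
  have H0: "H \<noteq> 0" using Hlc by auto
  have ker: "H dvd P" if "\<phi> P = 0" for P
  proof -
    obtain q r where qr: "pseudo_divmod P H = (q, r)" by (metis surj_pair)
    have "smult (coeff H (degree H) ^ (Suc (degree P) - degree H)) P = H * q + r"
      by (rule pseudo_divmod(1)[OF H0 qr])
    then have Pe: "P = H * q + r" using Hdeg Hlc by simp
    have rd: "r = 0 \<or> degree r < degree H" by (rule pseudo_divmod(2)[OF H0 qr])
    then have rdeg: "degree r \<le> p" using Hdeg by auto
    have "\<phi> r = 0" using that Pe \<phi>H by (simp add: rhomD[OF h\<phi>])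
    moreover have "\<phi> r = (\<Sum>j\<le>p. pcompose (coeff r j) u * monom 1 p ^ j)"
    proof -
      have inner: "(\<lambda>c. poly (map_poly (\<lambda>c. [:c:]) c) u) = (\<lambda>c. pcompose c u)"
        by (simp add: pcompose_altdef)
      have "\<phi> r = poly (map_poly (\<lambda>c. pcompose c u) r) v"
        unfolding \<phi>_def eval2_def inner ..
      also have "\<dots> = (\<Sum>j\<le>p. coeff (map_poly (\<lambda>c. pcompose c u) r) j * v ^ j)"
        by (rule poly_sum_le) (use map_poly_degree_leq[of "\<lambda>c. pcompose c u" r] rdeg in simp)
      finally show ?thesis by (simp add: coeff_map_poly v_def)
    qed
    ultimately have "r = 0" using phi_sum_zero[OF degu p0 rdeg] by simp
    then show ?thesis using Pe by simp
  qed
  have kerI: "\<phi> P = 0 \<longleftrightarrow> H dvd P" for P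
  proof
    assume "H dvd P" then obtain k where "P = H * k" by blast
    then show "\<phi> P = 0" using \<phi>H by (simp add: rhomD[OF h\<phi>])
  qed (rule ker)
  have prime: "prime_elem H"
    unfolding prime_elem_def
  proof (intro conjI allI impI)
    show "H \<noteq> 0" by (rule H0)
    show "\<not> H dvd 1"
    proof
      assume "H dvd 1"
      then have "\<phi> 1 = 0" using kerI by blast
      then show False using h\<phi> by (simp add: rhomD)
    qed
    fix a b assume "H dvd a * b"
    then have "\<phi> (a * b) = 0" using kerI by blast
    then have "\<phi> a * \<phi> b = 0" by (simp add: rhomD[OF h\<phi>])
    then have "\<phi> a = 0 \<or> \<phi> b = 0" by simp
    then show "H dvd a \<or> H dvd b" using kerI by blast
  qed
  have irr: "irreducible H" by (rule prime_elem_imp_irreducible[OF prime])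
  define S where "S = {r. \<exists>P Q. \<phi> Q \<noteq> 0 \<and> r = to_fract (\<phi> P) / to_fract (\<phi> Q)}"
  have Spoly: "to_fract (\<phi> P) \<in> S" for P
    unfolding S_def by (rule CollectI, rule exI[of _ P], rule exI[of _ 1]) (simp add: rhomD[OF h\<phi>])
  have Sadd: "x + y \<in> S" if xy: "x \<in> S" "y \<in> S" for x y
  proof -
    obtain P1 Q1 P2 Q2 where 1: "\<phi> Q1 \<noteq> 0" "x = to_fract (\<phi> P1) / to_fract (\<phi> Q1)"
      and 2: "\<phi> Q2 \<noteq> 0" "y = to_fract (\<phi> P2) / to_fract (\<phi> Q2)" using xy unfolding S_def by blast
    have "x + y = to_fract (\<phi> (P1 * Q2 + P2 * Q1)) / to_fract (\<phi> (Q1 * Q2))"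
      unfolding 1(2) 2(2) using 1(1) 2(1) by (simp add: rhomD[OF h\<phi>] field_simps)
    moreover have "\<phi> (Q1 * Q2) \<noteq> 0" using 1 2 by (simp add: rhomD[OF h\<phi>])
    ultimately show ?thesis unfolding S_def by blast
  qed
  have Smult: "x * y \<in> S" if xy: "x \<in> S" "y \<in> S" for x y
  proof -
    obtain P1 Q1 P2 Q2 where 1: "\<phi> Q1 \<noteq> 0" "x = to_fract (\<phi> P1) / to_fract (\<phi> Q1)"
      and 2: "\<phi> Q2 \<noteq> 0" "y = to_fract (\<phi> P2) / to_fract (\<phi> Q2)" using xy unfolding S_def by blast
    have "x * y = to_fract (\<phi> (P1 * P2)) / to_fract (\<phi> (Q1 * Q2))"
      using 1 2 by (simp add: rhomD[OF h\<phi>])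
    moreover have "\<phi> (Q1 * Q2) \<noteq> 0" using 1 2 by (simp add: rhomD[OF h\<phi>])
    ultimately show ?thesis unfolding S_def by blast
  qed
  have Sdiv: "x / y \<in> S" if xy: "x \<in> S" "y \<in> S" and y0: "y \<noteq> 0" for x y
  proof -
    obtain P1 Q1 P2 Q2 where 1: "\<phi> Q1 \<noteq> 0" "x = to_fract (\<phi> P1) / to_fract (\<phi> Q1)"
      and 2: "\<phi> Q2 \<noteq> 0" "y = to_fract (\<phi> P2) / to_fract (\<phi> Q2)" using xy unfolding S_def by blast
    have P2: "\<phi> P2 \<noteq> 0" using 2 y0 by auto
    have "x / y = to_fract (\<phi> (P1 * Q2)) / to_fract (\<phi> (Q1 * P2))"
      using 1 2 P2 by (simp add: rhomD[OF h\<phi>])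
    moreover have "\<phi> (Q1 * P2) \<noteq> 0" using 1 P2 by (simp add: rhomD[OF h\<phi>])
    ultimately show ?thesis unfolding S_def by blast
  qed
  have St: "to_fract [:0,1:] \<in> S"
  proof -
    have "\<phi> (constA d - varX) = monom 1 (p+1)"
      by (simp add: rhomD[OF h\<phi>] \<phi>X \<phi>C u_def minus_monom)
    moreover have "\<phi> varY = monom 1 p" by (simp add: \<phi>Y v_def)
    moreover have "to_fract (monom (1::'k) (p+1)) / to_fract (monom 1 p) = to_fract [:0,1:]"
    proof -
      have m: "to_fract (monom (1::'k) (p+1)) = to_fract (monom 1 p) * to_fract [:0,1:]"
        by (simp only: Suc_eq_plus1[symmetric] monom_one_Suc to_fract_mult)
      have "to_fract (monom (1::'k) p) \<noteq> 0" by simp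
      then show ?thesis unfolding m by simp
    qed
    ultimately show ?thesis using Sdiv Spoly
      by (metis to_fract_eq_0_iff monom_eq_0_iff one_neq_zero)
  qed
  have Sall: "to_fract a \<in> S" for a :: "'k poly"
  proof (induction a)
    case 0 then show ?case using Spoly[of 0] by (simp add: rhomD[OF h\<phi>])
  next
    case (pCons x a)
    have e: "to_fract (pCons x a) = to_fract (\<phi> (constA x)) + to_fract [:0,1:] * to_fract a"
      by (simp add: \<phi>C flip: to_fract_add to_fract_mult)
    show ?case unfolding e by (intro Sadd Smult Spoly St pCons.IH)
  qed
  have gen: "r \<in> S" for r :: "'k poly fract"
  proof -
    obtain a b where b: "b \<noteq> 0" "r = to_fract a / to_fract b" by (rule fract_repr)
    then show ?thesis using Sdiv Sall by simp
  qed
  have tr: "eval2 (\<lambda>c. to_fract [:c:]) P (to_fract u) (to_fract v) = to_fract (\<phi> P)" for P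
    unfolding \<phi>_def by (rule eval2_to_fract[OF rhom_const])
  have A: "\<forall>P. eval2 (\<lambda>c. to_fract [:c:]) P (to_fract u) (to_fract v) = 0 \<longleftrightarrow> H dvd P"
    unfolding tr using kerI by simp
  have B: "\<forall>r. \<exists>P Q. eval2 (\<lambda>c. to_fract [:c:]) Q (to_fract u) (to_fract v) \<noteq> 0 \<and>
               r = eval2 (\<lambda>c. to_fract [:c:]) P (to_fract u) (to_fract v) /
                   eval2 (\<lambda>c. to_fract [:c:]) Q (to_fract u) (to_fract v)"
  proof
    fix r :: "'k poly fract"
    from gen[of r] obtain P Q where "\<phi> Q \<noteq> 0" "r = to_fract (\<phi> P) / to_fract (\<phi> Q)"
      unfolding S_def by blast
    then show "\<exists>P Q. eval2 (\<lambda>c. to_fract [:c:]) Q (to_fract u) (to_fract v) \<noteq> 0 \<and>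
               r = eval2 (\<lambda>c. to_fract [:c:]) P (to_fract u) (to_fract v) /
                   eval2 (\<lambda>c. to_fract [:c:]) Q (to_fract u) (to_fract v)"
      unfolding tr by auto
  qed
  show ?thesis
    unfolding k_rational_quotient_def H_def[symmetric] using irr A B by blast
qed



definition der :: "('a::comm_ring_1 \<Rightarrow> 'a) \<Rightarrow> bool" where
  "der d \<longleftrightarrow> (\<forall>a b. d (a+b) = d a + d b) \<and> (\<forall>a b. d (a*b) = d a * b + a * d b)"

lemma derD:
  assumes "der d"
  shows "d (a+b) = d a + d b" "d (a*b) = d a * b + a * d b" "d 0 = 0" "d 1 = 0"
    "d (-a) = - d a" "d (a - b) = d a - d b"
    "d (a ^ Suc n) = of_nat (Suc n) * a ^ n * d a"
proof -
  show a: "d (a+b) = d a + d b" and m: "d (a*b) = d a * b + a * d b" for a b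
    using assms unfolding der_def by auto
  have "d 0 = d 0 + d 0" using a[of 0 0] by simp
  then show z: "d 0 = 0" by simp
  have "d 1 = d 1 + d 1" using m[of 1 1] by simp
  then show "d 1 = 0" by simp
  have n: "d (-x) = - d x" for x
  proof -
    have "d (-x) + d x = 0" using a[of "-x" x] z by simp
    then show ?thesis by (simp add: eq_neg_iff_add_eq_0)
  qed
  then show "d (-a) = - d a" .
  show "d (a - b) = d a - d b" using a[of a "-b"] n[of b] by simp
  show "d (a ^ Suc n) = of_nat (Suc n) * a ^ n * d a"
  proof (induction n)
    case 0 then show ?case using m[of a 1] by simp
  next
    case (Suc n)
    have "d (a ^ Suc (Suc n)) = d (a * a ^ Suc n)" by simp
    also have "\<dots> = d a * a ^ Suc n + a * (of_nat (Suc n) * a ^ n * d a)" using m Suc by simp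
    also have "\<dots> = of_nat (Suc (Suc n)) * a ^ Suc n * d a" by (simp add: algebra_simps)
    finally show ?case .
  qed
qed

lemma der_pderiv: "der (pderiv :: 'a::idom poly \<Rightarrow> _)"
  unfolding der_def by (simp add: pderiv_add pderiv_mult algebra_simps)

lemma map_pderiv_add: "map_poly pderiv (a + b) = map_poly pderiv a + map_poly pderiv (b :: 'a::idom poly poly)"
  by (intro poly_eqI) (simp add: coeff_map_poly pderiv_add)

lemma map_pderiv_smult: "map_poly pderiv (smult c b) = smult c (map_poly pderiv b) + smult (pderiv c) (b :: 'a::idom poly poly)"
  by (intro poly_eqI) (simp add: coeff_map_poly pderiv_mult algebra_simps)

lemma der_map_pderiv: "der (map_poly pderiv :: 'a::idom poly poly \<Rightarrow> _)"
  unfolding der_def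
proof (intro conjI allI)
  fix a b :: "'a poly poly"
  show "map_poly pderiv (a + b) = map_poly pderiv a + map_poly pderiv b" by (rule map_pderiv_add)
  show "map_poly pderiv (a * b) = map_poly pderiv a * b + a * map_poly pderiv b"
  proof (induction a)
    case 0 then show ?case by simp
  next
    case (pCons c a)
    have "map_poly pderiv (pCons c a * b) = map_poly pderiv (smult c b) + map_poly pderiv (pCons 0 (a * b))"
      by (simp add: map_pderiv_add)
    also have "\<dots> = smult c (map_poly pderiv b) + smult (pderiv c) b + pCons 0 (map_poly pderiv a * b + a * map_poly pderiv b)"
      by (simp add: map_pderiv_smult map_poly_pCons pCons.IH)
    also have "\<dots> = map_poly pderiv (pCons c a) * b + pCons c a * map_poly pderiv b"
      by (simp add: map_poly_pCons algebra_simps)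
    finally show ?case .
  qed
qed

definition fder :: "('a::idom \<Rightarrow> 'a) \<Rightarrow> 'a fract \<Rightarrow> 'a fract" where
  "fder d x = (SOME y. \<exists>a b. b \<noteq> 0 \<and> x = to_fract a / to_fract b \<and>
      y = (to_fract (d a) * to_fract b - to_fract a * to_fract (d b)) / (to_fract b)^2)"

lemma fder_wd:
  fixes a b a' b' :: "'a::idom"
  assumes "der d" "b \<noteq> 0" "b' \<noteq> 0" "to_fract a / to_fract b = to_fract a' / to_fract b'"
  shows "(to_fract (d a) * to_fract b - to_fract a * to_fract (d b)) / (to_fract b)^2 =
         (to_fract (d a') * to_fract b' - to_fract a' * to_fract (d b')) / (to_fract b')^2"
proof -
  have "to_fract a * to_fract b' = to_fract a' * to_fract b" using assms(2-4) by (simp add: field_simps)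
  then have "to_fract (a * b') = to_fract (a' * b)" by simp
  then have e1: "a * b' = a' * b" by (simp only: to_fract_eq_iff)
  have e2: "d a * b' + a * d b' = d a' * b + a' * d b"
    using arg_cong[OF e1, of d] derD(2)[OF assms(1)] by simp
  have e3: "d a * b' - d a' * b = a' * d b - a * d b'" using e2 by (simp add: algebra_simps)
  have "(d a * b - a * d b) * b'^2 - (d a' * b' - a' * d b') * b^2
      = b * b' * (d a * b' - d a' * b) - a * b'^2 * d b + a' * b^2 * d b'"
    by (simp add: algebra_simps power2_eq_square)
  also have "\<dots> = d b * b' * (a' * b - a * b') + d b' * b * (a' * b - a * b')"
    unfolding e3 by (simp add: algebra_simps power2_eq_square)
  also have "\<dots> = 0" using e1 by simp
  finally have "(d a * b - a * d b) * b'^2 = (d a' * b' - a' * d b') * b^2" by simp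
  then have "to_fract ((d a * b - a * d b) * b'^2) = to_fract ((d a' * b' - a' * d b') * b^2)" by simp
  then show ?thesis using assms(2,3) by (simp add: field_simps rhomD(7)[OF rhom_to_fract])
qed

lemma fder_eq:
  assumes "der d" "b \<noteq> 0"
  shows "fder d (to_fract a / to_fract b) = (to_fract (d a) * to_fract b - to_fract a * to_fract (d b)) / (to_fract b)^2"
proof -
  let ?x = "to_fract a / to_fract b"
  let ?P = "\<lambda>y. \<exists>a' b'. b' \<noteq> 0 \<and> ?x = to_fract a' / to_fract b' \<and>
      y = (to_fract (d a') * to_fract b' - to_fract a' * to_fract (d b')) / (to_fract b')^2"
  have ex: "?P ((to_fract (d a) * to_fract b - to_fract a * to_fract (d b)) / (to_fract b)^2)"
    using assms by blast
  have "?P (fder d ?x)" unfolding fder_def by (rule someI[of ?P, OF ex])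
  then obtain a' b' where "b' \<noteq> 0" "?x = to_fract a' / to_fract b'"
    "fder d ?x = (to_fract (d a') * to_fract b' - to_fract a' * to_fract (d b')) / (to_fract b')^2" by blast
  then show ?thesis using fder_wd[where a=a' and b=b' and a'=a and b'=b and d=d] assms by simp
qed

lemma fder_to_fract: "der d \<Longrightarrow> fder d (to_fract a) = to_fract (d a)"
  using fder_eq[of d 1 a] by (simp add: derD)

lemma der_fder:
  assumes "der d" shows "der (fder d)"
  unfolding der_def
proof (intro conjI allI)
  fix x y :: "'a fract"
  obtain a b where b: "b \<noteq> 0" and x: "x = to_fract a / to_fract b" by (rule fract_repr)
  obtain c e where e: "e \<noteq> 0" and y: "y = to_fract c / to_fract e" by (rule fract_repr)
  have be: "b * e \<noteq> 0" using b e by simp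
  have s: "x + y = to_fract (a * e + c * b) / to_fract (b * e)" using b e by (simp add: x y field_simps)
  have "fder d (x + y) = (to_fract (d (a * e + c * b)) * to_fract (b*e) - to_fract (a * e + c * b) * to_fract (d (b*e))) / (to_fract (b*e))^2"
    unfolding s by (rule fder_eq[OF assms be])
  also have "\<dots> = fder d x + fder d y"
    unfolding x y fder_eq[OF assms b] fder_eq[OF assms e] using b e
    by (simp add: derD[OF assms] field_simps power2_eq_square)
  finally show "fder d (x + y) = fder d x + fder d y" .
  have s2: "x * y = to_fract (a * c) / to_fract (b * e)" using b e by (simp add: x y field_simps)
  have "fder d (x * y) = (to_fract (d (a * c)) * to_fract (b*e) - to_fract (a * c) * to_fract (d (b*e))) / (to_fract (b*e))^2"
    unfolding s2 by (rule fder_eq[OF assms be])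
  also have "\<dots> = fder d x * y + x * fder d y"
    unfolding x y fder_eq[OF assms b] fder_eq[OF assms e] using b e
    by (simp add: derD[OF assms] field_simps power2_eq_square)
  finally show "fder d (x * y) = fder d x * y + x * fder d y" .
qed

lemma der_div:
  fixes D :: "'a::field \<Rightarrow> 'a"
  assumes "der D" "y \<noteq> 0"
  shows "D (x / y) = (D x * y - x * D y) / y^2"
proof -
  have "D x = D ((x / y) * y)" using assms(2) by simp
  also have "\<dots> = D (x/y) * y + (x/y) * D y" by (rule derD(2)[OF assms(1)])
  finally show ?thesis using assms(2) by (simp add: field_simps power2_eq_square)
qed

lemma chain_inner:
  fixes D :: "'b::comm_ring_1 \<Rightarrow> 'b"
  assumes "der D" "rhom e" "\<And>c. D (e c) = 0"
  shows "D (poly (map_poly e c) x) = poly (map_poly e (pderiv c)) x * D x"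
proof (induction c)
  case 0 then show ?case using assms by (simp add: derD)
next
  case (pCons a c)
  have "D (poly (map_poly e (pCons a c)) x) = D (e a + x * poly (map_poly e c) x)"
    using assms(2) by (simp add: map_poly_pCons rhomD)
  also have "\<dots> = D x * poly (map_poly e c) x + x * (poly (map_poly e (pderiv c)) x * D x)"
    using assms pCons by (simp add: derD)
  also have "\<dots> = poly (map_poly e (pderiv (pCons a c))) x * D x"
    using assms(2) by (simp add: pderiv_pCons map_poly_add_hom map_poly_pCons rhomD algebra_simps)
  finally show ?case .
qed

lemma chain:
  fixes D :: "'b::comm_ring_1 \<Rightarrow> 'b" and P :: "'a::idom poly poly"
  assumes "der D" "rhom e" "\<And>c. D (e c) = 0"
  shows "D (eval2 e P x y) = eval2 e (map_poly pderiv P) x y * D x + eval2 e (pderiv P) x y * D y"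
proof (induction P)
  case 0 then show ?case using assms by (simp add: derD eval2_def)
next
  case (pCons c P)
  have hi: "rhom (\<lambda>c. poly (map_poly e c) x)" by (rule rhom_inner[OF assms(2)])
  have "D (eval2 e (pCons c P) x y) = D (poly (map_poly e c) x + y * eval2 e P x y)"
    by (simp add: eval2_pCons[OF assms(2)])
  also have "\<dots> = poly (map_poly e (pderiv c)) x * D x + (D y * eval2 e P x y + y * (eval2 e (map_poly pderiv P) x y * D x + eval2 e (pderiv P) x y * D y))"
    using pCons chain_inner[OF assms] by (simp add: derD[OF assms(1)])
  also have "\<dots> = eval2 e (map_poly pderiv (pCons c P)) x y * D x + eval2 e (pderiv (pCons c P)) x y * D y"
    using assms(2) hi
    by (simp add: map_poly_pCons eval2_pCons pderiv_pCons rhomD[OF rhom_eval2[OF assms(2)]] algebra_simps)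
  finally show ?case .
qed



lemma coeff_pcompose_monom:
  fixes r :: "'a::comm_ring_1 poly"
  assumes "p > 0"
  shows "coeff (pcompose r (monom 1 p)) n = (if p dvd n then coeff r (n div p) else 0)"
proof (induction r arbitrary: n)
  case 0 show ?case by simp
next
  case (pCons a r)
  have "coeff (pcompose (pCons a r) (monom 1 p)) n =
        coeff [:a:] n + (if n < p then 0 else coeff (pcompose r (monom 1 p)) (n - p))"
    by (simp add: pcompose_pCons coeff_monom_mult)
  also have "\<dots> = (if p dvd n then coeff (pCons a r) (n div p) else 0)"
  proof (cases "n < p")
    case True
    then show ?thesis
    proof (cases "n = 0")
      case False
      with True have "\<not> p dvd n" using dvd_imp_le by fastforce
      then show ?thesis using True False by (simp add: coeff_pCons split: nat.splits)
    qed simp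
  next
    case False
    then have n0: "n \<noteq> 0" using assms by auto
    have dv: "p dvd n \<longleftrightarrow> p dvd (n - p)" using False by (simp add: dvd_minus_self)
    have dd: "n div p = Suc ((n - p) div p)"
    proof -
      have "n div p = ((n - p) + p) div p" using False by simp
      also have "\<dots> = (n-p) div p + 1" using assms by (simp add: div_add_self2)
      finally show ?thesis by simp
    qed
    show ?thesis using False n0 pCons.IH[of "n - p"] dv dd
      by (auto simp: coeff_pCons split: nat.splits)
  qed
  finally show ?case .
qed

definition contr :: "nat \<Rightarrow> 'a::zero poly \<Rightarrow> 'a poly" where
  "contr p q = Poly (map (\<lambda>i. coeff q (p*i)) [0..<Suc (degree q)])"

lemma coeff_contr:
  assumes "p > 0" shows "coeff (contr p q) i = coeff q (p*i)"
proof (cases "i < Suc (degree q)")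
  case True then show ?thesis by (simp add: contr_def nth_default_def del: upt_Suc)
next
  case False
  then have "degree q < p * i" using assms
  proof -
    have "degree q < i" using False by simp
    also have "i \<le> p * i" using assms by simp
    finally show ?thesis .
  qed
  then show ?thesis using False by (simp add: contr_def nth_default_def coeff_eq_0)
qed

lemma degree_contr:
  assumes "p > 0" shows "degree (contr p q) \<le> degree q div p"
proof (rule degree_le, intro allI impI)
  fix i assume "degree q div p < i"
  then have "degree q < p * i" using assms
    by (metis div_less_iff_less_mult mult.commute)
  then show "coeff (contr p q) i = 0" by (simp add: coeff_contr[OF assms] coeff_eq_0)
qed

lemma pcompose_contr:
  fixes q :: "'a::comm_ring_1 poly"
  assumes "p > 0" "\<And>n. \<not> p dvd n \<Longrightarrow> coeff q n = 0"
  shows "pcompose (contr p q) (monom 1 p) = q"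
proof (rule poly_eqI)
  fix n show "coeff (pcompose (contr p q) (monom 1 p)) n = coeff q n"
    using assms by (auto simp: coeff_pcompose_monom coeff_contr)
qed

lemma frob_poly:
  fixes V :: "'a::comm_ring_1 poly"
  assumes "CHAR('a) = p" "prime p"
  shows "V ^ p = pcompose (map_poly (\<lambda>c. c ^ p) V) (monom 1 p)"
proof -
  have p0: "p > 0" using assms(2) prime_gt_0_nat by blast
  have cp: "CHAR('a poly) = p" using assms(1) by simp
  show ?thesis
  proof (induction V)
    case 0 then show ?case using p0 by (simp add: zero_power)
  next
    case (pCons a V)
    have e: "pCons a V = [:a:] + monom 1 1 * V" by (simp add: monom_Suc)
    have "(pCons a V) ^ p = [:a:]^p + (monom 1 1)^p * V ^ p"
      unfolding e frob_add[OF cp assms(2)] power_mult_distrib ..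
    also have "[:a:]^p = [:a^p:]" by (rule rhomD(7)[OF rhom_const, symmetric])
    also have "(monom (1::'a) 1)^p = monom 1 p" by (simp add: monom_power)
    finally show ?case using p0
      by (simp add: pCons.IH map_poly_pCons pcompose_pCons zero_power)
  qed
qed

lemma pderiv_zero_coeff:
  fixes q :: "'a::idom poly"
  assumes "CHAR('a) = p" "pderiv q = 0" "\<not> p dvd n"
  shows "coeff q n = 0"
proof (cases n)
  case 0 then show ?thesis using assms by simp
next
  case (Suc m)
  have "coeff (pderiv q) m = of_nat (Suc m) * coeff q (Suc m)" by (rule coeff_pderiv)
  then have "of_nat (Suc m) * coeff q (Suc m) = 0" using assms(2) by simp
  moreover have "of_nat (Suc m) \<noteq> (0::'a)"
  proof
    assume "of_nat (Suc m) = (0::'a)"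
    then have "CHAR('a) dvd Suc m" by (simp only: of_nat_eq_0_iff_char_dvd)
    then show False using assms(1,3) Suc by simp
  qed
  ultimately show ?thesis using Suc by simp
qed

lemma degree_pderiv_le: "degree (pderiv (q::'a::idom poly)) \<le> degree q - 1"
  by (rule degree_le) (auto simp: coeff_pderiv coeff_eq_0)

lemma pderiv_nz_deg: "pderiv (q::'a::idom poly) \<noteq> 0 \<Longrightarrow> degree q \<ge> 1"
proof (rule ccontr)
  assume "pderiv q \<noteq> 0" "\<not> degree q \<ge> 1"
  then have "degree q = 0" by simp
  then obtain c where "q = [:c:]" by (rule degree_eq_zeroE)
  then show False using \<open>pderiv q \<noteq> 0\<close> by simp
qed



definition md :: "'a::zero poly poly \<Rightarrow> nat" where
  "md W = Max ((\<lambda>j. degree (coeff W j)) ` {..degree W})"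

definition mu :: "'a::zero poly poly \<Rightarrow> nat" where
  "mu W = degree W + md W"

lemma md_ge: "degree (coeff W j) \<le> md W"
proof (cases "j \<le> degree W")
  case True then show ?thesis unfolding md_def by (intro Max_ge) auto
next
  case False then show ?thesis by (simp add: coeff_eq_0)
qed

lemma md_le: "(\<And>j. degree (coeff W j) \<le> m) \<Longrightarrow> md W \<le> m"
  unfolding md_def by (subst Max_le_iff) auto

lemma mu_pderiv:
  fixes W :: "'a::idom poly poly"
  assumes "pderiv W \<noteq> 0" shows "mu (pderiv W) < mu W"
proof -
  have d1: "degree W \<ge> 1" by (rule pderiv_nz_deg[OF assms])
  have d2: "degree (pderiv W) \<le> degree W - 1" by (rule degree_pderiv_le)
  have "md (pderiv W) \<le> md W"
  proof (rule md_le)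
    fix j
    have "degree (coeff (pderiv W) j) = degree (of_nat (Suc j) * coeff W (Suc j))"
      by (simp add: coeff_pderiv)
    also have "\<dots> \<le> degree (coeff W (Suc j))"
      by (simp add: of_nat_poly)
    also have "\<dots> \<le> md W" by (rule md_ge)
    finally show "degree (coeff (pderiv W) j) \<le> md W" .
  qed
  then show ?thesis using d1 d2 unfolding mu_def by linarith
qed

lemma mu_d1:
  fixes W :: "'a::idom poly poly"
  assumes "map_poly pderiv W \<noteq> 0" shows "mu (map_poly pderiv W) < mu W"
proof -
  obtain j where j: "coeff (map_poly pderiv W) j \<noteq> 0" using assms by (metis leading_coeff_0_iff)
  then have "pderiv (coeff W j) \<noteq> 0" by (simp add: coeff_map_poly)
  then have "degree (coeff W j) \<ge> 1" by (rule pderiv_nz_deg)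
  then have m1: "md W \<ge> 1" using md_ge[of W j] by linarith
  have "md (map_poly pderiv W) \<le> md W - 1"
  proof (rule md_le)
    fix i
    have "degree (coeff (map_poly pderiv W) i) = degree (pderiv (coeff W i))"
      by (simp add: coeff_map_poly)
    also have "\<dots> \<le> degree (coeff W i) - 1" by (rule degree_pderiv_le)
    also have "\<dots> \<le> md W - 1" using md_ge[of W i] by simp
    finally show "degree (coeff (map_poly pderiv W) i) \<le> md W - 1" .
  qed
  moreover have "degree (map_poly pderiv W) \<le> degree W" by (rule map_poly_degree_leq)
  ultimately show ?thesis using m1 unfolding mu_def by linarith
qed

lemma rt_exists:
  assumes "alg_closed TYPE('k::field)" "p > 0"
  shows "(SOME y::'k. y ^ p = x) ^ p = x"
  using root_exists[OF assms, of x] by (rule someI_ex)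

lemma IND:
  fixes F :: "'k::field poly poly" and G :: "'k poly poly fract"
  assumes ac: "alg_closed TYPE('k)" and ch: "CHAR('k) = p" and p0: "p > 0"
    and DXG: "fder (map_poly pderiv) G \<noteq> 0"
    and DXF: "fder (map_poly pderiv) (to_fract F) = 0"
    and DYF: "fder pderiv (to_fract F) \<noteq> 0"
  shows "eval2 (\<lambda>c. to_fract (constA c)) W (to_fract F) G = 0 \<Longrightarrow> W = 0"
proof (induction "mu W" arbitrary: W rule: less_induct)
  case less
  define e where "e c = to_fract (constA c)" for c :: 'k
  define E where "E W = eval2 e W (to_fract F) G" for W
  define DX where "DX = fder (map_poly pderiv :: 'k poly poly \<Rightarrow> _)"
  define DY where "DY = fder (pderiv :: 'k poly poly \<Rightarrow> _)"
  have pr: "prime p" using prime_CHAR_field ch p0 by blast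
  have p2: "p \<ge> 2" using pr prime_ge_2_nat by blast
  have he: "rhom e" unfolding e_def by (rule rhom_comp[OF rhom_constA rhom_to_fract])
  have hE: "rhom E" unfolding E_def by (rule rhom_eval2[OF he])
  have dX: "der DX" unfolding DX_def by (rule der_fder[OF der_map_pderiv])
  have dY: "der DY" unfolding DY_def by (rule der_fder[OF der_pderiv])
  have eX: "DX (e c) = 0" for c
    unfolding DX_def e_def fder_to_fract[OF der_map_pderiv] by (simp add: constA_def map_poly_pCons)
  have eY: "DY (e c) = 0" for c
    unfolding DY_def e_def fder_to_fract[OF der_pderiv] by (simp add: constA_def)
  have chX: "DX (E V) = E (pderiv V) * DX G" for V
    using chain[OF dX he eX, of V "to_fract F" G] DXF unfolding E_def DX_def by simp
  have chY: "DY (E V) = E (map_poly pderiv V) * DY (to_fract F) + E (pderiv V) * DY G" for V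
    using chain[OF dY he eY, of V "to_fract F" G] unfolding E_def by simp
  have EW: "E W = 0" using less.prems unfolding E_def e_def .
  show "W = 0"
  proof (rule ccontr)
    assume W0: "W \<noteq> 0"
    have "E (pderiv W) * DX G = 0" using chX[of W] EW derD(3)[OF dX] by simp
    then have 1: "E (pderiv W) = 0" using DXG unfolding DX_def by simp
    have 2: "pderiv W = 0"
    proof (rule ccontr)
      assume "pderiv W \<noteq> 0"
      from less.hyps[OF mu_pderiv[OF this]] 1 show False
        using \<open>pderiv W \<noteq> 0\<close> unfolding E_def e_def by blast
    qed
    have "E (map_poly pderiv W) * DY (to_fract F) = 0"
      using chY[of W] EW 2 derD(3)[OF dY] hE by (simp add: rhomD)
    then have 3: "E (map_poly pderiv W) = 0" using DYF unfolding DY_def by simp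
    have 4: "map_poly pderiv W = 0"
    proof (rule ccontr)
      assume "map_poly pderiv W \<noteq> 0"
      from less.hyps[OF mu_d1[OF this]] 3 show False
        using \<open>map_poly pderiv W \<noteq> 0\<close> unfolding E_def e_def by blast
    qed
    have cW: "coeff W n = 0" if "\<not> p dvd n" for n
      using pderiv_zero_coeff[of p W n] ch 2 that by simp
    have cc: "coeff (coeff W j) i = 0" if "\<not> p dvd i" for i j
    proof -
      have "pderiv (coeff W j) = 0" using arg_cong[OF 4, of "\<lambda>X. coeff X j"] by (simp add: coeff_map_poly)
      then show ?thesis using pderiv_zero_coeff[of p "coeff W j" i] ch that by simp
    qed
    define rt where "rt x = (SOME y::'k. y ^ p = x)" for x
    have rtp: "rt x ^ p = x" for x unfolding rt_def by (rule rt_exists[OF ac p0])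
    have rt0: "rt 0 = 0" using rtp[of 0] p0 by simp
    define f where "f c = map_poly rt (contr p c)" for c :: "'k poly"
    define V where "V = map_poly f (contr p W)"
    have f0: "f 0 = 0" unfolding f_def contr_def by simp
    have fp: "(f c) ^ p = c" if "\<And>i. \<not> p dvd i \<Longrightarrow> coeff c i = 0" for c
    proof -
      have "(f c) ^ p = pcompose (map_poly (\<lambda>x. x ^ p) (f c)) (monom 1 p)"
        by (rule frob_poly[OF ch pr])
      also have "map_poly (\<lambda>x. x ^ p) (f c) = contr p c"
        unfolding f_def using p0 rt0 by (intro poly_eqI) (simp add: coeff_map_poly rtp zero_power)
      also have "pcompose (contr p c) (monom 1 p) = c" by (rule pcompose_contr[OF p0 that])
      finally show ?thesis .
    qed
    have VW: "V ^ p = W"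
    proof -
      have cp: "CHAR('k poly) = p" using ch by simp
      have "V ^ p = pcompose (map_poly (\<lambda>x. x ^ p) V) (monom 1 p)"
        by (rule frob_poly[OF cp pr])
      also have "map_poly (\<lambda>x. x ^ p) V = contr p W"
      proof (rule poly_eqI)
        fix j
        have "coeff (map_poly (\<lambda>x. x ^ p) V) j = (f (coeff W (p*j))) ^ p"
          unfolding V_def using p0 f0 by (simp add: coeff_map_poly coeff_contr zero_power)
        also have "\<dots> = coeff W (p*j)" by (rule fp) (rule cc)
        finally show "coeff (map_poly (\<lambda>x. x ^ p) V) j = coeff (contr p W) j"
          using p0 by (simp add: coeff_contr)
      qed
      also have "pcompose (contr p W) (monom 1 p) = W" by (rule pcompose_contr[OF p0 cW])
      finally show ?thesis .
    qed
    have "E V ^ p = 0" using EW VW hE by (simp add: rhomD(7)[OF hE, symmetric])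
    then have EV: "E V = 0" by simp
    show False
    proof (cases "mu W = 0")
      case True
      then have "degree W = 0" "md W = 0" unfolding mu_def by auto
      then have "degree (coeff W 0) = 0" using md_ge[of W 0] by simp
      then obtain c where c: "coeff W 0 = [:c:]" by (rule degree_eq_zeroE)
      have "W = constA c" using \<open>degree W = 0\<close> c unfolding constA_def
        by (metis degree_eq_zeroE coeff_pCons_0)
      then have "E W = to_fract (constA c)" unfolding E_def by (simp add: eval2_constA[OF he] e_def)
      moreover have "constA c \<noteq> 0" using W0 \<open>W = constA c\<close> by simp
      ultimately show False using EW by simp
    next
      case False
      have dV: "degree V \<le> degree W div p"
        unfolding V_def using map_poly_degree_leq[of f "contr p W"] degree_contr[OF p0, of W] by linarith
      have mV: "md V \<le> md W div p"
      proof (rule md_le)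
        fix j
        have "degree (coeff V j) = degree (f (coeff W (p*j)))"
          unfolding V_def using p0 f0 by (simp add: coeff_map_poly coeff_contr)
        also have "\<dots> \<le> degree (contr p (coeff W (p*j)))" unfolding f_def by (rule map_poly_degree_leq)
        also have "\<dots> \<le> degree (coeff W (p*j)) div p" by (rule degree_contr[OF p0])
        also have "\<dots> \<le> md W div p" by (intro div_le_mono md_ge)
        finally show "degree (coeff V j) \<le> md W div p" .
      qed
      have lt: "a div p + b div p < a + b" if "a + b \<noteq> 0" for a b :: nat
      proof -
        have "a div p \<le> a" "b div p \<le> b" by auto
        moreover have "a div p < a \<or> b div p < b" using that p2
          by (metis add_is_0 div_less_dividend gr0I less_le_trans one_less_numeral_iff semiring_norm(76))
        ultimately show ?thesis by linarith
      qed
      have "mu V < mu W" using dV mV lt[of "degree W" "md W"] False unfolding mu_def by linarith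
      from less.hyps[OF this] EV have "V = 0" unfolding E_def e_def by blast
      then show False using VW W0 p0 by (simp add: zero_power)
    qed
  qed
qed



lemma onevar:
  fixes q r :: "'k::field poly"
  assumes ac: "alg_closed TYPE('k)" and p0: "p > 0" and q0: "q \<noteq> 0"
  shows "q ^ (p+2) \<noteq> r ^ p * (q * pderiv r - r * pderiv q)"
  using q0
proof (induction "degree q" arbitrary: q r rule: less_induct)
  case less
  show ?case
  proof
    assume eq: "q ^ (p+2) = r ^ p * (q * pderiv r - r * pderiv q)"
    show False
    proof (cases "degree r = 0")
      case True
      then obtain c where c: "r = [:c:]" by (rule degree_eq_zeroE)
      have c0: "c \<noteq> 0"
      proof
        assume "c = 0"
        then have "q ^ (p+2) = 0" using eq c p0 by (simp add: zero_power)
        then show False using less.prems by simp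
      qed
      have "r ^ p * (q * pderiv r - r * pderiv q) = - smult (c ^ (p+1)) (pderiv q)"
        unfolding c by (simp add: rhomD(7)[OF rhom_const, symmetric] algebra_simps)
      then have eq2: "q ^ (p+2) = - smult (c ^ (p+1)) (pderiv q)" using eq by simp
      have pq: "pderiv q \<noteq> 0"
      proof
        assume "pderiv q = 0"
        then have "q ^ (p+2) = 0" using eq2 by simp
        then show False using less.prems by simp
      qed
      have "degree (q ^ (p+2)) = degree (pderiv q)" using eq2 c0 by simp
      moreover have "degree (q ^ (p+2)) = (p+2) * degree q" by (rule degree_power_eq[OF less.prems])
      moreover have "degree (pderiv q) \<le> degree q - 1" by (rule degree_pderiv_le)
      moreover have "degree q \<ge> 1" by (rule pderiv_nz_deg[OF pq])
      ultimately show False by (metis add_gr_0 diff_less le_trans less_one mult_le_mono1 not_le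
          mult_1 one_add_one p0 less_numeral_extra(1) le_add2 mult.commute nat_mult_le_cancel_disj)
    next
      case False
      then have "degree r \<ge> 1" by simp
      from ac[unfolded alg_closed_def, rule_format, OF this] obtain a where ra: "poly r a = 0" by blast
      define l where "l = [:-a, 1::'k:]"
      obtain r' where r': "r = l * r'" using ra unfolding l_def poly_eq_0_iff_dvd by blast
      have "poly (q ^ (p+2)) a = 0" unfolding eq using ra p0 by (simp add: zero_power)
      then have "poly q a = 0" by (simp add: zero_power) blast
      then obtain q' where q': "q = l * q'" unfolding l_def poly_eq_0_iff_dvd by blast
      have l0: "l \<noteq> 0" unfolding l_def by simp
      have q'0: "q' \<noteq> 0" using less.prems q' by auto
      have dl: "degree l = 1" unfolding l_def by simp
      have dq: "degree q' < degree q" using q' l0 q'0 dl by (simp add: degree_mult_eq)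
      have pl: "pderiv l = 1" unfolding l_def by (simp add: pderiv_pCons)
      define Z where "Z = q' * pderiv r' - r' * pderiv q'"
      have D: "q * pderiv r - r * pderiv q = l^2 * Z"
        unfolding q' r' Z_def by (simp add: pderiv_mult pl algebra_simps power2_eq_square)
      have L: "q ^ (p+2) = l^(p+2) * q'^(p+2)" unfolding q' by (rule power_mult_distrib)
      have R: "r ^ p * (q * pderiv r - r * pderiv q) = l^(p+2) * (r'^p * Z)"
        unfolding D unfolding r' power_mult_distrib power_add by (simp add: algebra_simps)
      have "l ^ (p+2) * q' ^ (p+2) = l ^ (p+2) * (r' ^ p * Z)" by (simp only: L[symmetric] R[symmetric] eq)
      then have "q' ^ (p+2) = r' ^ p * Z" using l0 by simp
      then have "q' ^ (p+2) = r' ^ p * (q' * pderiv r' - r' * pderiv q')" unfolding Z_def .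
      then show False using less.hyps[OF dq q'0] by blast
    qed
  qed
qed

lemma alg_closed_infinite:
  assumes "alg_closed TYPE('k::field)" shows "infinite (UNIV :: 'k set)"
proof
  assume fin: "finite (UNIV :: 'k set)"
  define P where "P = (\<Prod>a\<in>(UNIV::'k set). [:-a, 1:]) + 1"
  have dP0: "degree (\<Prod>a\<in>(UNIV::'k set). [:-a, 1:]) = card (UNIV :: 'k set)"
    by (subst degree_prod_eq_sum_degree) auto
  have "card (UNIV :: 'k set) \<ge> 1" using fin by (simp add: Suc_leI finite_UNIV_card_ge_0)
  then have dP: "degree P \<ge> 1" unfolding P_def using dP0 by (subst degree_add_eq_left) auto
  from assms[unfolded alg_closed_def, rule_format, OF dP] obtain x where "poly P x = 0" by blast
  moreover have "poly (\<Prod>a\<in>(UNIV::'k set). [:-a, 1:]) x = 0"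
    using fin by (simp add: poly_prod)
  ultimately show False unfolding P_def by simp
qed

lemma coeff_spec: "coeff (poly Q [:b:]) i = poly (map_poly (\<lambda>c. coeff c i) Q) b"
  by (induction Q) (simp_all add: map_poly_pCons)

lemma spec_nonzero:
  fixes Q :: "'k::field poly poly"
  assumes "alg_closed TYPE('k)" "Q \<noteq> 0"
  shows "\<exists>b. poly Q [:b:] \<noteq> 0"
proof -
  obtain j where j: "coeff Q j \<noteq> 0" using assms(2) by (metis leading_coeff_0_iff)
  obtain i where i: "coeff (coeff Q j) i \<noteq> 0" using j by (metis leading_coeff_0_iff)
  define h where "h = map_poly (\<lambda>c. coeff c i) Q"
  have "coeff h j \<noteq> 0" unfolding h_def using i by (simp add: coeff_map_poly)
  then have "h \<noteq> 0" by auto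
  then have "finite {x. poly h x = 0}" by (rule poly_roots_finite)
  then obtain b where "poly h b \<noteq> 0"
    using alg_closed_infinite[OF assms(1)] by (metis (mono_tags) UNIV_I ex_new_if_finite mem_Collect_eq)
  then have "coeff (poly Q [:b:]) i \<noteq> 0" unfolding h_def coeff_spec .
  then show ?thesis by (metis coeff_0)
qed

lemma spec_d1: "poly (map_poly pderiv W) [:b:] = pderiv (poly W [:b:])"
  by (induction W) (simp_all add: map_poly_pCons pderiv_add pderiv_mult pderiv_smult)



lemma part4:
  fixes F :: "'k::field poly poly"
  assumes ac: "alg_closed TYPE('k)" and ch: "CHAR('k) = p" and p0: "p > 0"
    and Fdef: "F = varX ^ p + varY ^ (p + 1)"
  shows "\<not> field_generator F"
proof
  assume "field_generator F"
  then obtain G where G: "kfield2 (to_fract F) G = UNIV" unfolding field_generator_def by blast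
  define e where "e c = to_fract (constA c)" for c :: 'k
  define E where "E W = eval2 e W (to_fract F) G" for W
  define DX where "DX = fder (map_poly pderiv :: 'k poly poly \<Rightarrow> _)"
  define DY where "DY = fder (pderiv :: 'k poly poly \<Rightarrow> _)"
  define y where "y = (to_fract varY :: 'k poly poly fract)"
  have he: "rhom e" unfolding e_def by (rule rhom_comp[OF rhom_constA rhom_to_fract])
  have hE: "rhom E" unfolding E_def by (rule rhom_eval2[OF he])
  have dX: "der DX" unfolding DX_def by (rule der_fder[OF der_map_pderiv])
  have dY: "der DY" unfolding DY_def by (rule der_fder[OF der_pderiv])
  have eX: "DX (e c) = 0" for c
    unfolding DX_def e_def fder_to_fract[OF der_map_pderiv] by (simp add: constA_def map_poly_pCons)
  have eY: "DY (e c) = 0" for c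
    unfolding DY_def e_def fder_to_fract[OF der_pderiv] by (simp add: constA_def)
  have cpp: "CHAR('k poly poly) = p" using ch by simp
  have ofp: "(of_nat p :: 'k poly poly) = 0" using cpp of_nat_CHAR[where 'a="'k poly poly"] by simp
  have ps: "p = Suc (p - 1)" using p0 by simp
  have dXvX: "map_poly pderiv (varX :: 'k poly poly) = 1" by (simp add: varX_def map_poly_pCons pderiv_pCons one_pCons)
  have dXvY: "map_poly pderiv (varY :: 'k poly poly) = 0" by (simp add: varY_def map_poly_pCons)
  have dYvX: "pderiv (varX :: 'k poly poly) = 0" by (simp add: varX_def)
  have dYvY: "pderiv (varY :: 'k poly poly) = 1" by (simp add: varY_def pderiv_pCons)
  have dXF: "map_poly pderiv F = 0"
  proof -
    have a: "map_poly pderiv ((varX :: 'k poly poly) ^ Suc (p-1)) = 0"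
      unfolding derD(7)[OF der_map_pderiv] using ofp ps by simp
    have b: "map_poly pderiv ((varY :: 'k poly poly) ^ Suc p) = 0"
      unfolding derD(7)[OF der_map_pderiv] dXvY by simp
    have e: "F = varX ^ Suc (p-1) + varY ^ Suc p" using Fdef ps by simp
    show ?thesis unfolding e map_pderiv_add a b by simp
  qed
  have dYF: "pderiv F = varY ^ p"
  proof -
    have a: "pderiv ((varX :: 'k poly poly) ^ Suc (p-1)) = 0"
      unfolding derD(7)[OF der_pderiv] dYvX by simp
    have b: "pderiv ((varY :: 'k poly poly) ^ Suc p) = varY ^ p"
      unfolding derD(7)[OF der_pderiv] dYvY using ofp by simp
    have e: "F = varX ^ Suc (p-1) + varY ^ Suc p" using Fdef ps by simp
    show ?thesis unfolding e pderiv_add a b by simp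
  qed
  have DXF: "DX (to_fract F) = 0" unfolding DX_def fder_to_fract[OF der_map_pderiv] dXF by simp
  have DYF: "DY (to_fract F) = y ^ p"
    unfolding DY_def fder_to_fract[OF der_pderiv] dYF y_def by (simp add: rhomD(7)[OF rhom_to_fract])
  have y0: "y \<noteq> 0" unfolding y_def varY_def by simp
  have DXy: "DX y = 0" unfolding y_def DX_def fder_to_fract[OF der_map_pderiv] dXvY by simp
  have DYy: "DY y = 1" unfolding y_def DY_def fder_to_fract[OF der_pderiv] dYvY by simp
  have DXx: "DX (to_fract varX) = 1" unfolding DX_def fder_to_fract[OF der_map_pderiv] dXvX by simp
  have chX: "DX (E V) = E (pderiv V) * DX G" for V
    using chain[OF dX he eX, of V "to_fract F" G] DXF unfolding E_def by simp
  have chY: "DY (E V) = E (map_poly pderiv V) * y ^ p + E (pderiv V) * DY G" for V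
    using chain[OF dY he eY, of V "to_fract F" G] DYF unfolding E_def by simp
  have mem: "z \<in> kfield2 (to_fract F) G" for z using G by simp
  have kf: "\<exists>P Q. E Q \<noteq> 0 \<and> z = E P / E Q" for z
    using mem[of z] unfolding kfield2_def E_def e_def by blast
  have DXG: "DX G \<noteq> 0"
  proof
    assume D0: "DX G = 0"
    obtain P Q where PQ: "E Q \<noteq> 0" "to_fract varX = E P / E Q" using kf by blast
    have "DX (E P / E Q) = (DX (E P) * E Q - E P * DX (E Q)) / (E Q)^2" by (rule der_div[OF dX PQ(1)])
    also have "\<dots> = 0" using chX D0 by simp
    finally show False using DXx PQ(2) by simp
  qed
  have IND': "W = 0" if "E W = 0" for W
    using IND[OF ac ch p0, of G F W] DXG DXF DYF y0 that unfolding E_def e_def DX_def DY_def by simp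
  obtain P Q where PQ: "E Q \<noteq> 0" "y = E P / E Q" using kf by blast
  have h1: "y * E Q = E P" using PQ by simp
  have h2: "y * E (pderiv Q) = E (pderiv P)"
  proof -
    have "DX (y * E Q) = DX (E P)" using h1 by simp
    then have "y * (E (pderiv Q) * DX G) = E (pderiv P) * DX G"
      using derD(2)[OF dX] DXy chX by simp
    then show ?thesis using DXG by (simp add: mult.assoc[symmetric])
  qed
  have h3: "E Q + y * E (map_poly pderiv Q) * y ^ p = E (map_poly pderiv P) * y ^ p"
  proof -
    have "DY (y * E Q) = DY (E P)" using h1 by simp
    then have "E Q + y * (E (map_poly pderiv Q) * y ^ p + E (pderiv Q) * DY G) =
               E (map_poly pderiv P) * y ^ p + E (pderiv P) * DY G"
      using derD(2)[OF dY] DYy chY by simp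
    then have eq: "(E Q + y * (E (map_poly pderiv Q) * y ^ p)) + y * (E (pderiv Q) * DY G) =
               E (map_poly pderiv P) * y ^ p + E (pderiv P) * DY G"
      by (simp only: distrib_left add.assoc)
    have k: "y * (E (pderiv Q) * DY G) = E (pderiv P) * DY G"
      by (simp only: mult.assoc[symmetric] h2)
    from eq[unfolded k] have "E Q + y * (E (map_poly pderiv Q) * y ^ p) = E (map_poly pderiv P) * y ^ p"
      by (rule add_right_imp_eq)
    then show ?thesis by (simp only: mult.assoc)
  qed
  define W where "W = Q ^ (p+2) + P ^ (p+1) * map_poly pderiv Q - P ^ p * Q * map_poly pderiv P"
  have "E W = E Q ^ (p+2) + E P ^ (p+1) * E (map_poly pderiv Q) - E P ^ p * E Q * E (map_poly pderiv P)"
    unfolding W_def by (simp add: rhomD[OF hE])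
  also have "\<dots> = E Q ^ (p+1) * (E Q + y * E (map_poly pderiv Q) * y ^ p - E (map_poly pderiv P) * y ^ p)"
  proof -
    have e1: "(y * E Q) ^ (p+1) = y * y ^ p * (E Q ^ p * E Q)" by (simp add: power_mult_distrib)
    have e2: "(y * E Q) ^ p = y ^ p * E Q ^ p" by (rule power_mult_distrib)
    have e3: "E Q ^ (p+2) = E Q ^ p * E Q * E Q" by (simp add: power_add power2_eq_square)
    have e4: "E Q ^ (p+1) = E Q ^ p * E Q" by simp
    show ?thesis unfolding h1[symmetric] e1 e2 e3 e4 by (simp add: algebra_simps)
  qed
  also have "\<dots> = 0" using h3 by simp
  finally have W0: "W = 0" by (rule IND')
  have Q0: "Q \<noteq> 0" using PQ(1) hE by (auto simp: rhomD)
  obtain b where b: "poly Q [:b:] \<noteq> 0" using spec_nonzero[OF ac Q0] by blast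
  define s where "s X = poly X [:b:]" for X :: "'k poly poly"
  have hs: "rhom s" unfolding s_def by (rule rhom_poly)
  have sd: "s (map_poly pderiv X) = pderiv (s X)" for X unfolding s_def by (rule spec_d1)
  have "s W = 0" using W0 hs by (simp add: rhomD)
  then have "s Q ^ (p+2) + s P ^ (p+1) * pderiv (s Q) - s P ^ p * s Q * pderiv (s P) = 0"
    unfolding W_def by (simp add: rhomD[OF hs] sd)
  then have "s Q ^ (p+2) = s P ^ p * (s Q * pderiv (s P) - s P * pderiv (s Q))"
    by (simp add: algebra_simps)
  then show False using onevar[OF ac p0, of "s Q" "s P"] b unfolding s_def by simp
qed


theorem mainTheorem11:
  fixes p :: nat and F :: "'k::field poly poly"
  assumes "alg_closed TYPE('k)"
    and "CHAR('k) = p" and "p > 0"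
    and "F = varX ^ p + varY ^ (p + 1)"
  shows "{a ^ p | a :: 'k poly poly. True} \<subseteq> kalg2 F varY
       \<and> good_pseudo_field_generator F
       \<and> (\<forall>c::'k. k_rational_quotient (F - constA c))
       \<and> \<not> field_generator F"
proof (intro conjI allI)
  show "{a ^ p | a :: 'k poly poly. True} \<subseteq> kalg2 F varY"
    using part1[OF assms(2,3,4)] by blast
  show "good_pseudo_field_generator F" by (rule part2[OF assms(2,3,4)])
  fix c :: 'k
  show "k_rational_quotient (F - constA c)" by (rule part3[OF assms])
next
  show "\<not> field_generator F" by (rule part4[OF assms])
qed

end
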